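(* Let $\mathcal N$ be a real normed space with norm $\|\cdot\|$ and origin $o$. Let $v_1,v_2\in\mathcal N$ and $\lambda_1,\lambda_2\geq 0$ be such that $\max\{\lambda_1,\lambda_2\}\geq 1$, $v_1\notin\operatorname{int}B(v_2,\lambda_2)$, $v_2\notin\operatorname{int}B(v_1,\lambda_1)$, and $B(v_i,\lambda_i)\cap B(o,1)\neq\emptyset$ for $i=1,2$. Define $\pi\colon\mathcal N\to B(o,2)$ by $\pi(x)=x$ if $\|x\|\leq 2$ and $\pi(x)=\frac{2}{\|x\|}x$ if $\|x\|\geq 2$. Then $\|\pi(v_1)-\pi(v_2)\|\geq 1$.
   Context: For $c\in\mathcal N$ and $r\geq 0$, $B(c,r)=\{x\in\mathcal N:\|x-c\|\leq r\}$ denotes the closed ball and $\operatorname{int}B(c,r)$ its interior. *)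

theory Defs
  imports "HOL-Analysis.Analysis"
begin

definition proj2 :: "'a::real_normed_vector \<Rightarrow> 'a" where
  "proj2 x = (if norm x \<le> 2 then x else (2 / norm x) *\<^sub>R x)"

end

theory Submission
  imports Defs
begin

lemma one_big:
  fixes a b :: "'a::real_normed_vector"
  assumes "norm a > 2" "norm (a - b) \<ge> norm a - 1"
  shows "norm ((2 / norm a) *\<^sub>R a - b) \<ge> 1"
proof -
  let ?u = "(2 / norm a) *\<^sub>R a"
  have e: "a - ?u = (1 - 2 / norm a) *\<^sub>R a" by (simp add: algebra_simps)
  have "norm (a - ?u) = (1 - 2 / norm a) * norm a"
  proof -
    have "0 \<le> 1 - 2 / norm a" using assms(1) by (simp add: divide_le_eq_1)
    thus ?thesis unfolding e by simp
  qed
  also have "\<dots> = norm a - 2" proof - have "norm a \<noteq> 0" using assms(1) by linarith thus ?thesis by (simp add: field_simps) qed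
  finally have n: "norm (a - ?u) = norm a - 2" .
  have "norm (a - b) \<le> norm (a - ?u) + norm (?u - b)"
    by (metis norm_triangle_ineq add_diff_cancel_left diff_add_cancel diff_diff_eq2)
  thus ?thesis using n assms by linarith
qed

lemma two_big:
  fixes a b :: "'a::real_normed_vector"
  assumes "norm a \<ge> norm b" "norm b > 2" "norm (a - b) \<ge> norm a - 1"
  shows "norm ((2 / norm a) *\<^sub>R a - (2 / norm b) *\<^sub>R b) \<ge> 1"
proof -
  let ?u = "(2 / norm a) *\<^sub>R a" and ?w = "(2 / norm b) *\<^sub>R b"
  have pa: "norm a > 0" "norm b > 0" using assms by auto
  have e: "a - b = (1 - norm b / norm a) *\<^sub>R a + (norm b / 2) *\<^sub>R (?u - ?w)"
    using pa by (simp add: algebra_simps scaleR_diff_right)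
  have n1: "norm ((1 - norm b / norm a) *\<^sub>R a) = norm a - norm b"
  proof -
    have "0 \<le> 1 - norm b / norm a" using assms pa by (simp add: divide_le_eq_1)
    hence "norm ((1 - norm b / norm a) *\<^sub>R a) = (1 - norm b / norm a) * norm a" by simp
    also have "\<dots> = norm a - norm b" using pa by (simp add: field_simps)
    finally show ?thesis .
  qed
  have n2: "norm ((norm b / 2) *\<^sub>R (?u - ?w)) = (norm b / 2) * norm (?u - ?w)" by simp
  have "norm (a - b) \<le> (norm a - norm b) + (norm b / 2) * norm (?u - ?w)"
    using e n1 n2 norm_triangle_ineq by metis
  hence "(norm b / 2) * norm (?u - ?w) \<ge> norm b - 1" using assms by linarith
  hence "norm b * norm (?u - ?w) \<ge> norm b * 1" using assms by linarith
  thus ?thesis using pa(2) mult_le_cancel_left_pos by blast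
qed

theorem mainTheorem3:
  fixes v1 v2 :: "'a::real_normed_vector" and l1 l2 :: real
  assumes "l1 \<ge> 0" and "l2 \<ge> 0"
    and "max l1 l2 \<ge> 1"
    and "v1 \<notin> interior (cball v2 l2)"
    and "v2 \<notin> interior (cball v1 l1)"
    and "cball v1 l1 \<inter> cball 0 1 \<noteq> {}"
    and "cball v2 l2 \<inter> cball 0 1 \<noteq> {}"
  shows "norm (proj2 v1 - proj2 v2) \<ge> 1"
proof -
  have d1: "norm (v1 - v2) \<ge> l1"
  proof (rule ccontr)
    assume "\<not> ?thesis"
    hence "v2 \<in> ball v1 l1" by (simp add: dist_norm)
    hence "v2 \<in> interior (cball v1 l1)"
      by (meson interior_maximal ball_subset_cball open_ball subsetD)
    thus False using assms(5) by blast
  qed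
  have d2: "norm (v1 - v2) \<ge> l2"
  proof (rule ccontr)
    assume "\<not> ?thesis"
    hence "v1 \<in> ball v2 l2" by (simp add: dist_norm norm_minus_commute)
    hence "v1 \<in> interior (cball v2 l2)"
      by (meson interior_maximal ball_subset_cball open_ball subsetD)
    thus False using assms(4) by blast
  qed
  have b1: "norm v1 \<le> 1 + l1"
  proof -
    obtain x where "dist v1 x \<le> l1" "norm x \<le> 1" using assms(6) by auto
    thus ?thesis using norm_triangle_ineq[of "v1 - x" x] by (simp add: dist_norm)
  qed
  have b2: "norm v2 \<le> 1 + l2"
  proof -
    obtain x where "dist v2 x \<le> l2" "norm x \<le> 1" using assms(7) by auto
    thus ?thesis using norm_triangle_ineq[of "v2 - x" x] by (simp add: dist_norm)
  qed
  have d: "norm (v1 - v2) \<ge> 1" using d1 d2 assms(3) by linarith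
  show ?thesis
  proof (cases "norm v1 \<le> 2")
    case c1: True
    show ?thesis
    proof (cases "norm v2 \<le> 2")
      case True thus ?thesis using c1 d by (simp add: proj2_def)
    next
      case False
      have "norm (v2 - v1) \<ge> norm v2 - 1" using d2 b2 by (simp add: norm_minus_commute)
      hence "norm ((2 / norm v2) *\<^sub>R v2 - v1) \<ge> 1" using one_big False by force
      thus ?thesis using c1 False by (simp add: proj2_def norm_minus_commute)
    qed
  next
    case c1: False
    show ?thesis
    proof (cases "norm v2 \<le> 2")
      case True
      have "norm (v1 - v2) \<ge> norm v1 - 1" using d1 b1 by simp
      hence "norm ((2 / norm v1) *\<^sub>R v1 - v2) \<ge> 1" using one_big c1 by force
      thus ?thesis using c1 True by (simp add: proj2_def)
    next
      case False
      show ?thesis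
      proof (cases "norm v1 \<ge> norm v2")
        case True
        have "norm (v1 - v2) \<ge> norm v1 - 1" using d1 b1 by simp
        hence "norm ((2 / norm v1) *\<^sub>R v1 - (2 / norm v2) *\<^sub>R v2) \<ge> 1"
          using two_big True False by force
        thus ?thesis using c1 False by (simp add: proj2_def)
      next
        case nt: False
        have "norm (v2 - v1) \<ge> norm v2 - 1" using d2 b2 by (simp add: norm_minus_commute)
        hence "norm ((2 / norm v2) *\<^sub>R v2 - (2 / norm v1) *\<^sub>R v1) \<ge> 1"
          using two_big[of v1 v2] nt c1 by force
        thus ?thesis using c1 False by (simp add: proj2_def norm_minus_commute)
      qed
    qed
  qed
qed

end
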